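(* In the setting described in the context, let $\eta\in[0,1)$ and let $h\in\mathbb{R}$ satisfy $1+\eta h>0$ and $1-(1-\eta)h>0$. Set \[ \kappa=\frac{1-(1-\eta)h}{1+\eta h}. \] Then \[ \big(K(\eta)^\circ-he_0\big)^\circ=\frac{1}{1-(1-\eta)h}\,K(\eta,\kappa). \]
   Context: Let $x_1,\dots,x_m\in\mathbb{R}^n$ and $Q=\operatorname{conv}\{\pm x_i: i\in[m]\}$, assumed to contain a neighborhood of the origin; $B_2^n$ is the Euclidean unit ball; $Q_1=\operatorname{conv}(Q\cup B_2^n)$. For a set $L$, its polar is $L^\circ=\{y:\langle y,z\rangle\le 1\ \forall z\in L\}$; $Q_1^\circ=Q^\circ\cap B_2^n$. Equip $\mathbb{R}^{n+1}$ with orthonormal basis $e_0,\dots,e_n$ and identify $\mathbb{R}^n$ with $\operatorname{span}\{e_1,\dots,e_n\}$. For $\eta\in\mathbb{R}$, $\kappa>0$ define $K(\eta,\kappa)=\operatorname{conv}\big((1-\eta)e_0+Q,\ -\kappa\eta e_0+\kappa Q_1^\circ\big)$ and $K(\eta)=K(\eta,1)=\operatorname{conv}(e_0+Q,Q_1^\circ)-\eta e_0$. *)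

theory Defs
  imports "HOL-Analysis.Analysis"
begin

text \<open>R^{n+1} is modelled as real \<times> 'a, with e_0 = (1,0) and R^n = {0} \<times> 'a.\<close>

definition polar :: "'b::real_inner set \<Rightarrow> 'b set" where
  "polar L = {y. \<forall>z\<in>L. inner y z \<le> 1}"

definition Qset :: "(nat \<Rightarrow> 'a::euclidean_space) \<Rightarrow> nat \<Rightarrow> 'a set" where
  "Qset x m = convex hull ((\<lambda>i. x i) ` {1..m} \<union> (\<lambda>i. - x i) ` {1..m})"

definition Q1set :: "(nat \<Rightarrow> 'a::euclidean_space) \<Rightarrow> nat \<Rightarrow> 'a set" where
  "Q1set x m = convex hull (Qset x m \<union> cball 0 1)"

definition e0 :: "real \<times> 'a::euclidean_space" where
  "e0 = (1, 0)"

definition emb :: "'a::euclidean_space \<Rightarrow> real \<times> 'a" where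
  "emb v = (0, v)"

definition Kset :: "(nat \<Rightarrow> 'a::euclidean_space) \<Rightarrow> nat \<Rightarrow> real \<Rightarrow> real \<Rightarrow> (real \<times> 'a) set" where
  "Kset x m \<eta> \<kappa> = convex hull
     ((\<lambda>q. (1 - \<eta>) *\<^sub>R e0 + emb q) ` Qset x m \<union>
      (\<lambda>p. (- \<kappa> * \<eta>) *\<^sub>R e0 + \<kappa> *\<^sub>R emb p) ` polar (Q1set x m))"

end

theory Submission
  imports Defs
begin

lemma polar_convex: "convex (polar (L::'b::real_inner set))"
proof -
  have "polar L = (\<Inter>z\<in>L. {y. inner z y \<le> 1})"
    by (auto simp: polar_def inner_commute)
  then show ?thesis by (simp add: convex_INT convex_halfspace_le)
qed

lemma polar_closed: "closed (polar (L::'b::real_inner set))"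
proof -
  have "polar L = (\<Inter>z\<in>L. {y. inner z y \<le> 1})"
    by (auto simp: polar_def inner_commute)
  then show ?thesis by (simp add: closed_INT closed_halfspace_le)
qed

lemma zero_polar: "0 \<in> polar L"
  by (simp add: polar_def)

lemma bipolar:
  fixes S :: "'b::euclidean_space set"
  assumes "closed S" "convex S" "0 \<in> S"
  shows "polar (polar S) = S"
proof
  show "S \<subseteq> polar (polar S)"
    by (auto simp: polar_def inner_commute)
  show "polar (polar S) \<subseteq> S"
  proof
    fix z assume z: "z \<in> polar (polar S)"
    show "z \<in> S"
    proof (rule ccontr)
      assume "z \<notin> S"
      then obtain a b where ab: "inner a z < b" "\<forall>x\<in>S. inner a x > b"
        using separating_hyperplane_closed_point[OF assms(2,1)] by blast
      then have b: "b < 0" using assms(3) by force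
      have "(1/b) *\<^sub>R a \<in> polar S"
        unfolding polar_def
      proof clarify
        fix x assume "x \<in> S"
        then have "inner a x > b" using ab by auto
        then show "inner ((1/b) *\<^sub>R a) x \<le> 1" using b by (simp add: field_simps)
      qed
      then have "inner z ((1/b) *\<^sub>R a) \<le> 1" using z unfolding polar_def by blast
      then have "inner ((1/b) *\<^sub>R a) z \<le> 1" by (simp add: inner_commute)
      then show False using ab b by (simp add: field_simps)
    qed
  qed
qed

lemma polar_translate:
  fixes S :: "'b::euclidean_space set"
  assumes "compact S" "convex S" "0 \<in> S" "\<forall>x\<in>S. inner x a < 1"
  shows "polar ((\<lambda>z. z - a) ` polar S) = (\<lambda>x. (1 / (1 - inner x a)) *\<^sub>R x) ` S"
proof
  show "(\<lambda>x. (1 / (1 - inner x a)) *\<^sub>R x) ` S \<subseteq> polar ((\<lambda>z. z - a) ` polar S)"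
  proof (clarsimp simp: polar_def)
    fix x z assume x: "x \<in> S" and z: "\<forall>y\<in>S. inner z y \<le> 1"
    have lt: "inner x a < 1" using x assms(4) by auto
    have "inner x z \<le> 1" using z x by (simp add: inner_commute)
    then show "inner x (z - a) / (1 - inner x a) \<le> 1"
      using lt by (simp add: inner_diff_right)
  qed
  show "polar ((\<lambda>z. z - a) ` polar S) \<subseteq> (\<lambda>x. (1 / (1 - inner x a)) *\<^sub>R x) ` S"
  proof
    fix y assume y: "y \<in> polar ((\<lambda>z. z - a) ` polar S)"
    then have yz: "\<And>z. z \<in> polar S \<Longrightarrow> inner y z - inner y a \<le> 1"
      by (auto simp: polar_def inner_diff_right)
    define s where "s = 1 + inner y a"
    have s0: "s \<ge> 0" using yz[OF zero_polar] by (simp add: s_def)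
    have spos: "s > 0"
    proof (rule ccontr)
      assume "\<not> s > 0"
      then have s: "inner y a = -1" using s0 s_def by simp
      then have yn: "y \<noteq> 0" by auto
      obtain R where R: "R > 0" "\<forall>x\<in>S. norm x \<le> R"
        using compact_imp_bounded[OF assms(1)] bounded_pos by blast
      define z where "z = (1 / (R * norm y)) *\<^sub>R y"
      have "z \<in> polar S"
        unfolding polar_def
      proof clarify
        fix x assume "x \<in> S"
        have "inner z x \<le> norm z * norm x" by (rule norm_cauchy_schwarz)
        also have "\<dots> \<le> (1/R) * R"
          using R \<open>x \<in> S\<close> yn by (intro mult_mono) (auto simp: z_def)
        finally show "inner z x \<le> 1" using R by simp
      qed
      from yz[OF this] s have "inner y z \<le> 0" by simp
      moreover have "inner y z = norm y / R"
        using yn R by (simp add: z_def field_simps norm_eq_sqrt_inner)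
      ultimately show False using yn R by (simp add: divide_le_0_iff)
    qed
    define x where "x = (1/s) *\<^sub>R y"
    have "\<forall>z\<in>polar S. inner x z \<le> 1"
    proof
      fix z assume "z \<in> polar S"
      from yz[OF this] have "inner y z \<le> s" by (simp add: s_def)
      then show "inner x z \<le> 1" using spos by (simp add: x_def field_simps)
    qed
    then have "x \<in> polar (polar S)" unfolding polar_def[of "polar S"] by simp
    then have xS: "x \<in> S" using bipolar[OF compact_imp_closed[OF assms(1)] assms(2,3)] by simp
    have "1 - inner x a = 1 / s" using spos by (simp add: x_def s_def field_simps)
    then have "y = (1 / (1 - inner x a)) *\<^sub>R x" using spos by (simp add: x_def)
    then show "y \<in> (\<lambda>x. (1 / (1 - inner x a)) *\<^sub>R x) ` S" using xS by blast
  qed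
qed


lemma convex_affine_img:
  assumes "convex S" "linear f"
  shows "convex ((\<lambda>q. c + f q) ` S)"
proof -
  have "(\<lambda>q. c + f q) ` S = (+) c ` (f ` S)" by auto
  then show ?thesis using convex_translation convex_linear_image assms by metis
qed

lemma Kset_form:
  fixes x :: "nat \<Rightarrow> 'a::euclidean_space"
  assumes Qne: "Qset x m \<noteq> {}"
  shows "Kset x m \<eta> \<kappa> = {u *\<^sub>R ((1 - \<eta>) *\<^sub>R e0 + emb q) + v *\<^sub>R (\<kappa> *\<^sub>R ((- \<eta>) *\<^sub>R e0 + emb p)) | u v q p.
      u \<ge> 0 \<and> v \<ge> 0 \<and> u + v = 1 \<and> q \<in> Qset x m \<and> p \<in> polar (Q1set x m)}"
proof -
  have lin1: "linear (emb :: 'a \<Rightarrow> real \<times> 'a)"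
    by (auto simp: linear_iff emb_def)
  have lin2: "linear (\<lambda>p. \<kappa> *\<^sub>R (emb p :: real \<times> 'a))"
    by (auto simp: linear_iff emb_def scaleR_add_right)
  have e: "(\<lambda>p. (- \<kappa> * \<eta>) *\<^sub>R e0 + \<kappa> *\<^sub>R emb p) = (\<lambda>p. ((- \<kappa> * \<eta>) *\<^sub>R e0) + \<kappa> *\<^sub>R (emb p :: real \<times> 'a))"
    by simp
  have c1: "convex ((\<lambda>q. (1 - \<eta>) *\<^sub>R e0 + emb q) ` Qset x m)"
    by (rule convex_affine_img[OF _ lin1]) (simp add: Qset_def convex_convex_hull)
  have c2: "convex ((\<lambda>p. (- \<kappa> * \<eta>) *\<^sub>R e0 + \<kappa> *\<^sub>R emb p) ` polar (Q1set x m))"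
    by (rule convex_affine_img[OF polar_convex lin2])
  have n2: "polar (Q1set x m) \<noteq> {}" using zero_polar by blast
  have "Kset x m \<eta> \<kappa> = {u *\<^sub>R s + v *\<^sub>R t | u v s t. u \<ge> 0 \<and> v \<ge> 0 \<and> u + v = 1 \<and>
      s \<in> (\<lambda>q. (1 - \<eta>) *\<^sub>R e0 + emb q) ` Qset x m \<and> t \<in> (\<lambda>p. (- \<kappa> * \<eta>) *\<^sub>R e0 + \<kappa> *\<^sub>R emb p) ` polar (Q1set x m)}"
    unfolding Kset_def using convex_hull_union_two[OF c1 _ c2] Qne n2 by blast
  also have "\<dots> = {u *\<^sub>R ((1 - \<eta>) *\<^sub>R e0 + emb q) + v *\<^sub>R (\<kappa> *\<^sub>R ((- \<eta>) *\<^sub>R e0 + emb p)) | u v q p.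
      u \<ge> 0 \<and> v \<ge> 0 \<and> u + v = 1 \<and> q \<in> Qset x m \<and> p \<in> polar (Q1set x m)}"
  proof -
    have "\<And>p. (- \<kappa> * \<eta>) *\<^sub>R e0 + \<kappa> *\<^sub>R emb p = \<kappa> *\<^sub>R ((- \<eta>) *\<^sub>R e0 + (emb p :: real \<times> 'a))"
      by (simp add: algebra_simps)
    then have e: "(\<lambda>p. (- \<kappa> * \<eta>) *\<^sub>R e0 + \<kappa> *\<^sub>R emb p) = (\<lambda>p. \<kappa> *\<^sub>R ((- \<eta>) *\<^sub>R e0 + (emb p :: real \<times> 'a)))"
      by (rule ext)
    show ?thesis unfolding e by blast
  qed
  finally show ?thesis .
qed

lemma combo1:
  fixes A B :: "'c::real_vector"
  assumes "D1 > 0" "D2 > 0" "u \<ge> 0" "v \<ge> 0" "u + v = 1" "\<kappa> = D1 / D2"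
  shows "(1 / (u * D1 + v * D2)) *\<^sub>R (u *\<^sub>R A + v *\<^sub>R B) =
     (1/D1) *\<^sub>R ((u * D1/(u * D1 + v * D2)) *\<^sub>R A + (v * D2/(u * D1 + v * D2)) *\<^sub>R (\<kappa> *\<^sub>R B))"
    "u * D1/(u * D1 + v * D2) \<ge> 0" "v * D2/(u * D1 + v * D2) \<ge> 0"
    "u * D1/(u * D1 + v * D2) + v * D2/(u * D1 + v * D2) = 1"
proof -
  have d: "u * D1 + v * D2 > 0" using assms
    by (metis add_nonneg_pos add_pos_nonneg less_eq_real_def mult_nonneg_nonneg mult_pos_pos zero_less_one)
  have c1: "1 / (u * D1 + v * D2) * u = 1/D1 * (u * D1/(u * D1 + v * D2))" using assms d by (simp add: field_simps)
  have c2: "1 / (u * D1 + v * D2) * v = 1/D1 * (v * D2/(u * D1 + v * D2) * \<kappa>)" using assms d unfolding assms(6) by (simp add: field_simps)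
  show "(1 / (u * D1 + v * D2)) *\<^sub>R (u *\<^sub>R A + v *\<^sub>R B) =
     (1/D1) *\<^sub>R ((u * D1/(u * D1 + v * D2)) *\<^sub>R A + (v * D2/(u * D1 + v * D2)) *\<^sub>R (\<kappa> *\<^sub>R B))"
    by (simp only: scaleR_add_right scaleR_scaleR c1 c2 mult.assoc)
  show "u * D1/(u * D1 + v * D2) \<ge> 0" "v * D2/(u * D1 + v * D2) \<ge> 0" using assms d by auto
  show "u * D1/(u * D1 + v * D2) + v * D2/(u * D1 + v * D2) = 1" using d by (simp add: add_divide_distrib[symmetric])
qed

lemma combo2:
  fixes A B :: "'c::real_vector"
  assumes "D1 > 0" "D2 > 0" "u' \<ge> 0" "v' \<ge> 0" "u' + v' = 1" "\<kappa> = D1 / D2"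
  defines "s \<equiv> u'/D1 + v'/D2"
  shows "(1 / ((u'/D1/s)*D1 + (v'/D2/s)*D2)) *\<^sub>R ((u'/D1/s) *\<^sub>R A + (v'/D2/s) *\<^sub>R B) =
     (1/D1) *\<^sub>R (u' *\<^sub>R A + v' *\<^sub>R (\<kappa> *\<^sub>R B))"
    "u'/D1/s \<ge> 0" "v'/D2/s \<ge> 0" "u'/D1/s + v'/D2/s = 1"
proof -
  have sp: "s > 0" using assms unfolding s_def
    by (metis add_nonneg_pos add_pos_nonneg divide_nonneg_pos divide_pos_pos less_eq_real_def zero_less_one)
  have d1: "(u'/D1/s)*D1 = u'/s" using assms(1) by simp
  have d2: "(v'/D2/s)*D2 = v'/s" using assms(2) by simp
  have d: "(u'/D1/s)*D1 + (v'/D2/s)*D2 = 1/s" unfolding d1 d2 using assms(5) by (simp add: add_divide_distrib[symmetric])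
  have c1: "s * (u'/D1/s) = 1/D1 * u'" using sp by (simp add: field_simps)
  have c2: "s * (v'/D2/s) = 1/D1 * (v' * \<kappa>)" using sp assms(1,2) unfolding assms(6) by (simp add: field_simps)
  show "(1 / ((u'/D1/s)*D1 + (v'/D2/s)*D2)) *\<^sub>R ((u'/D1/s) *\<^sub>R A + (v'/D2/s) *\<^sub>R B) =
     (1/D1) *\<^sub>R (u' *\<^sub>R A + v' *\<^sub>R (\<kappa> *\<^sub>R B))"
    unfolding d by (simp only: divide_divide_eq_right div_by_1 mult_1 scaleR_add_right scaleR_scaleR c1 c2 mult.assoc)
  show "u'/D1/s \<ge> 0" "v'/D2/s \<ge> 0" using assms sp by auto
  have "u'/D1/s + v'/D2/s = s/s" unfolding s_def by (simp only: add_divide_distrib)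
  then show "u'/D1/s + v'/D2/s = 1" using sp by simp
qed


lemma fst_A: "fst ((1 - \<eta>) *\<^sub>R e0 + emb q) = 1 - \<eta>"
  and fst_B: "fst ((- \<eta>) *\<^sub>R e0 + emb p) = - \<eta>"
  by (simp_all add: e0_def emb_def)

lemma inner_e0: "inner z (h *\<^sub>R e0) = h * fst z"
  by (cases z) (simp add: e0_def)

theorem lemma5p1:
  fixes x :: "nat \<Rightarrow> 'a::euclidean_space" and m :: nat and \<eta> h \<kappa> :: real
  assumes "0 \<in> interior (Qset x m)"
    and "0 \<le> \<eta>" and "\<eta> < 1"
    and "1 + \<eta> * h > 0" and "1 - (1 - \<eta>) * h > 0"
    and "\<kappa> = (1 - (1 - \<eta>) * h) / (1 + \<eta> * h)"
  shows "polar ((\<lambda>z. z - h *\<^sub>R e0) ` polar (Kset x m \<eta> 1))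
         = (\<lambda>z. (1 / (1 - (1 - \<eta>) * h)) *\<^sub>R z) ` Kset x m \<eta> \<kappa>"
proof -
  define D1 where "D1 = 1 - (1 - \<eta>) * h"
  define D2 where "D2 = 1 + \<eta> * h"
  have D1: "D1 > 0" and D2: "D2 > 0" using assms by (auto simp: D1_def D2_def)
  have kap: "\<kappa> = D1 / D2" using assms by (simp add: D1_def D2_def)
  define Q where "Q = Qset x m"
  define P where "P = polar (Q1set x m)"
  define A where "A q = (1 - \<eta>) *\<^sub>R e0 + emb q" for q :: 'a
  define B where "B p = (- \<eta>) *\<^sub>R e0 + emb p" for p :: 'a
  have Q0: "0 \<in> Q" using assms(1) interior_subset unfolding Q_def by blast
  have P0: "0 \<in> P" unfolding P_def by (rule zero_polar)
  have Qc: "compact Q" unfolding Q_def Qset_def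
    by (intro compact_convex_hull finite_imp_compact) auto
  have Pc: "compact P"
  proof -
    have cb: "cball 0 1 \<subseteq> Q1set x m" unfolding Q1set_def
      using hull_subset[of "Qset x m \<union> cball 0 1" convex] by blast
    have "P \<subseteq> cball 0 1"
    proof
      fix y assume y: "y \<in> P"
      show "y \<in> cball 0 1"
      proof (cases "y = 0")
        case False
        have "(1 / norm y) *\<^sub>R y \<in> cball 0 1" using False by simp
        then have "(1 / norm y) *\<^sub>R y \<in> Q1set x m" using cb by blast
        then have "inner y ((1 / norm y) *\<^sub>R y) \<le> 1" using y unfolding P_def polar_def by blast
        moreover have "inner y ((1 / norm y) *\<^sub>R y) = norm y"
          using False by (simp add: power2_eq_square flip: power2_norm_eq_inner)
        ultimately show ?thesis by simp
      qed simp
    qed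
    moreover have "closed P" unfolding P_def by (rule polar_closed)
    ultimately show ?thesis
      using bounded_subset[OF bounded_cball] compact_eq_bounded_closed by blast
  qed
  have Kform: "\<And>k. Kset x m \<eta> k = {u *\<^sub>R A q + v *\<^sub>R (k *\<^sub>R B p) | u v q p.
      u \<ge> 0 \<and> v \<ge> 0 \<and> u + v = 1 \<and> q \<in> Q \<and> p \<in> P}"
    unfolding A_def B_def Q_def P_def by (rule Kset_form) (use Q0 Q_def in blast)
  have K1c: "compact (Kset x m \<eta> 1)"
  proof -
    have "compact ((\<lambda>q. (1 - \<eta>) *\<^sub>R e0 + emb q) ` Q \<union> (\<lambda>p. (- 1 * \<eta>) *\<^sub>R e0 + 1 *\<^sub>R emb p) ` P)"
      using Qc Pc by (intro compact_Un compact_continuous_image) (auto simp: emb_def intro!: continuous_intros)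
    then show ?thesis unfolding Kset_def Q_def P_def by (rule compact_convex_hull)
  qed
  have K1v: "convex (Kset x m \<eta> 1)" unfolding Kset_def by (rule convex_convex_hull)
  have K10: "0 \<in> Kset x m \<eta> 1"
  proof -
    have "\<eta> *\<^sub>R A 0 + (1 - \<eta>) *\<^sub>R (1 *\<^sub>R B 0) = 0"
      by (simp add: A_def B_def algebra_simps emb_def zero_prod_def)
    moreover have "\<eta> \<ge> 0" "1 - \<eta> \<ge> 0" "\<eta> + (1 - \<eta>) = 1" using assms(2,3) by auto
    ultimately show ?thesis unfolding Kform using Q0 P0 by (metis (mono_tags, lifting) mem_Collect_eq)
  qed
  have K1lt: "\<forall>z\<in>Kset x m \<eta> 1. inner z (h *\<^sub>R e0) < 1"
  proof
    fix z assume "z \<in> Kset x m \<eta> 1"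
    then obtain u v q p where z: "z = u *\<^sub>R A q + v *\<^sub>R (1 *\<^sub>R B p)" "u \<ge> 0" "v \<ge> 0" "u + v = 1"
      unfolding Kform by blast
    have fz: "fst z = u * (1 - \<eta>) + v * (- \<eta>)"
      using z by (simp add: A_def B_def e0_def emb_def)
    have "inner z (h *\<^sub>R e0) = u * (h * (1 - \<eta>)) + v * (- h * \<eta>)"
      unfolding inner_e0 fz by (simp add: algebra_simps)
    also have "\<dots> < 1"
    proof -
      have a: "h * (1 - \<eta>) < 1" "- h * \<eta> < 1" using assms(4,5) by (auto simp: algebra_simps)
      show ?thesis
      proof (cases "u = 0")
        case True then show ?thesis using z a by simp
      next
        case False
        then have up: "u > 0" using z by auto
        have "u * (h * (1 - \<eta>)) < u * 1" by (rule mult_strict_left_mono[OF a(1) up])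
        moreover have "v * (- h * \<eta>) \<le> v * 1" using mult_left_mono[OF less_imp_le[OF a(2)] z(3)] .
        ultimately show ?thesis using z by linarith
      qed
    qed
    finally show "inner z (h *\<^sub>R e0) < 1" .
  qed
  have L: "polar ((\<lambda>z. z - h *\<^sub>R e0) ` polar (Kset x m \<eta> 1)) =
      (\<lambda>z. (1 / (1 - inner z (h *\<^sub>R e0))) *\<^sub>R z) ` Kset x m \<eta> 1"
    by (rule polar_translate[OF K1c K1v K10 K1lt])
  have den: "\<And>u v q p. u + v = 1 \<Longrightarrow> 1 - inner (u *\<^sub>R A q + v *\<^sub>R (1 *\<^sub>R B p)) (h *\<^sub>R e0) = u * D1 + v * D2"
  proof -
    fix u v :: real and q p
    assume uv: "u + v = 1"
    have fz: "fst (u *\<^sub>R A q + v *\<^sub>R (1 *\<^sub>R B p)) = u * (1 - \<eta>) + v * (- \<eta>)"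
      by (simp add: A_def B_def e0_def emb_def)
    have "1 - inner (u *\<^sub>R A q + v *\<^sub>R (1 *\<^sub>R B p)) (h *\<^sub>R e0) = (u + v) - (u * (h * (1 - \<eta>)) + v * (- h * \<eta>))"
      using uv unfolding inner_e0 fz by (simp add: algebra_simps)
    then show "1 - inner (u *\<^sub>R A q + v *\<^sub>R (1 *\<^sub>R B p)) (h *\<^sub>R e0) = u * D1 + v * D2"
      by (simp add: D1_def D2_def algebra_simps)
  qed
  have "(\<lambda>z. (1 / (1 - inner z (h *\<^sub>R e0))) *\<^sub>R z) ` Kset x m \<eta> 1 =
      (\<lambda>z. (1 / D1) *\<^sub>R z) ` Kset x m \<eta> \<kappa>"
  proof
    show "(\<lambda>z. (1 / (1 - inner z (h *\<^sub>R e0))) *\<^sub>R z) ` Kset x m \<eta> 1 \<subseteq> (\<lambda>z. (1 / D1) *\<^sub>R z) ` Kset x m \<eta> \<kappa>"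
    proof (rule image_subsetI)
      fix z assume "z \<in> Kset x m \<eta> 1"
      then obtain u v q p where z: "z = u *\<^sub>R A q + v *\<^sub>R (1 *\<^sub>R B p)" "u \<ge> 0" "v \<ge> 0" "u + v = 1"
        "q \<in> Q" "p \<in> P"
        unfolding Kform by blast
      note c = combo1(1)[where A="A q" and B="B p", OF D1 D2 z(2,3,4) kap]
               combo1(2-4)[OF D1 D2 z(2,3,4) kap]
      have "(1 / (1 - inner z (h *\<^sub>R e0))) *\<^sub>R z = (1/D1) *\<^sub>R ((u * D1/(u * D1 + v * D2)) *\<^sub>R A q + (v * D2/(u * D1 + v * D2)) *\<^sub>R (\<kappa> *\<^sub>R B p))"
        using c(1) z(1) den[OF z(4)] by simp
      moreover have "(u * D1/(u * D1 + v * D2)) *\<^sub>R A q + (v * D2/(u * D1 + v * D2)) *\<^sub>R (\<kappa> *\<^sub>R B p) \<in> Kset x m \<eta> \<kappa>"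
        unfolding Kform using c(2-4) z(5,6) by blast
      ultimately show "(1 / (1 - inner z (h *\<^sub>R e0))) *\<^sub>R z \<in> (\<lambda>z. (1 / D1) *\<^sub>R z) ` Kset x m \<eta> \<kappa>"
        by blast
    qed
    show "(\<lambda>z. (1 / D1) *\<^sub>R z) ` Kset x m \<eta> \<kappa> \<subseteq> (\<lambda>z. (1 / (1 - inner z (h *\<^sub>R e0))) *\<^sub>R z) ` Kset x m \<eta> 1"
    proof (rule image_subsetI)
      fix z assume "z \<in> Kset x m \<eta> \<kappa>"
      then obtain u v q p where z: "z = u *\<^sub>R A q + v *\<^sub>R (\<kappa> *\<^sub>R B p)" "u \<ge> 0" "v \<ge> 0" "u + v = 1"
        "q \<in> Q" "p \<in> P"
        unfolding Kform by blast
      define s where "s = u/D1 + v/D2"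
      note c = combo2(1)[where A="A q" and B="B p", OF D1 D2 z(2,3,4) kap, folded s_def]
               combo2(2-4)[OF D1 D2 z(2,3,4) kap, folded s_def]
      define w where "w = (u/D1/s) *\<^sub>R A q + (v/D2/s) *\<^sub>R (1 *\<^sub>R B p)"
      have wK: "w \<in> Kset x m \<eta> 1" unfolding Kform w_def using c(2-4) z(5,6) by blast
      have "(1 / D1) *\<^sub>R z = (1 / (1 - inner w (h *\<^sub>R e0))) *\<^sub>R w"
        using c(1) z(1) den[OF c(4)] unfolding w_def by simp
      then show "(1 / D1) *\<^sub>R z \<in> (\<lambda>z. (1 / (1 - inner z (h *\<^sub>R e0))) *\<^sub>R z) ` Kset x m \<eta> 1"
        using wK by blast
    qed
  qed
  then show ?thesis using L by (simp add: D1_def)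
qed

end
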